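(* Let $K=\mathbb{Q}(\sqrt2)$ and $\delta\in K^*$. Let $q_1(t)=t^2-(4+2\sqrt2)t-3-2\sqrt2$ and $p(t)=t^4-12t^3+2t^2+12t+1$, let $H_\delta$ be the genus $2$ curve $\delta W^2=q_1(t)p(t)$ and $E_\delta$ the elliptic curve $\delta y^2=x^3+5\sqrt2x^2-x$. Then $\varphi(t,W)=\left(\frac{-2(-3+2\sqrt2)\,q_1(t)}{(t-\sqrt2+1)^2},\ \frac{3(-4+3\sqrt2)\,W}{(t-\sqrt2+1)^3}\right)$ defines a non-constant morphism $\varphi:H_\delta\to E_\delta$. *)

theory Defs
  imports Complex_Main
begin

text \<open>We work inside the complex numbers, which contain an algebraic closure of
  K = Q(sqrt 2); sqrt 2 denotes the positive real square root.\<close>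

definition r2 :: complex where "r2 = complex_of_real (sqrt 2)"

definition K :: "complex set" where
  "K = {of_rat a + of_rat b * r2 | a b. True}"

definition q1 :: "complex \<Rightarrow> complex" where
  "q1 t = t^2 - (4 + 2*r2) * t - 3 - 2*r2"

definition p :: "complex \<Rightarrow> complex" where
  "p t = t^4 - 12*t^3 + 2*t^2 + 12*t + 1"

definition on_H :: "complex \<Rightarrow> complex \<Rightarrow> complex \<Rightarrow> bool" where
  "on_H \<delta> t W \<longleftrightarrow> \<delta> * W^2 = q1 t * p t"

definition on_E :: "complex \<Rightarrow> complex \<Rightarrow> complex \<Rightarrow> bool" where
  "on_E \<delta> x y \<longleftrightarrow> \<delta> * y^2 = x^3 + 5*r2*x^2 - x"

definition phi_x :: "complex \<Rightarrow> complex" where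
  "phi_x t = (-2 * (-3 + 2*r2) * q1 t) / (t - r2 + 1)^2"

definition phi_y :: "complex \<Rightarrow> complex \<Rightarrow> complex" where
  "phi_y t W = (3 * (-4 + 3*r2) * W) / (t - r2 + 1)^3"

end

theory Submission
  imports Defs
begin

lemma r2sq: "r2^2 = 2"
  unfolding r2_def by (simp flip: of_real_power)

lemma r2_real: "r2 = complex_of_real (sqrt 2)" by (simp add: r2_def)

lemma key: "9*(-4+3*r2)^2 * p t = (6-4*r2)^3 * (q1 t)^2 + 5*r2*(6-4*r2)^2 * q1 t * (t-r2+1)^2 - (6-4*r2)*(t-r2+1)^4"
proof -
  have h: "r2*r2 = 2" using r2sq by (simp add: power2_eq_square)
  have h2: "r2*(r2*x) = 2*x" for x using h by (simp add: mult.assoc[symmetric])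
  show ?thesis unfolding p_def q1_def
    by (simp add: algebra_simps power2_eq_square power3_eq_cube power4_eq_xxxx h h2)
qed

theorem lemma7p3:
  fixes \<delta> :: complex
  assumes "\<delta> \<in> K" and "\<delta> \<noteq> 0"
  shows "(\<forall>t W. on_H \<delta> t W \<and> t \<noteq> r2 - 1 \<longrightarrow> on_E \<delta> (phi_x t) (phi_y t W))
       \<and> (\<exists>t1 W1 t2 W2. on_H \<delta> t1 W1 \<and> on_H \<delta> t2 W2 \<and> t1 \<noteq> r2 - 1 \<and> t2 \<noteq> r2 - 1
            \<and> (phi_x t1, phi_y t1 W1) \<noteq> (phi_x t2, phi_y t2 W2))"
proof
  show "\<forall>t W. on_H \<delta> t W \<and> t \<noteq> r2 - 1 \<longrightarrow> on_E \<delta> (phi_x t) (phi_y t W)"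
  proof (intro allI impI)
    fix t W assume a: "on_H \<delta> t W \<and> t \<noteq> r2 - 1"
    define D where "D = t - r2 + 1"
    have D: "D \<noteq> 0" proof
    assume "D = 0" then have "t = r2 - 1" unfolding D_def by (simp add: algebra_simps eq_neg_iff_add_eq_0)
    then show False using a by simp
  qed
    have H: "\<delta> * W^2 = q1 t * p t" using a by (simp add: on_H_def)
    have x: "phi_x t = (6-4*r2) * q1 t / D^2" by (simp add: phi_x_def D_def algebra_simps)
    have y: "phi_y t W = 3 * (-4 + 3*r2) * W / D^3" by (simp add: phi_y_def D_def)
    have "\<delta> * (3 * (-4 + 3*r2) * W / D^3)^2 = 9*(-4+3*r2)^2 * (\<delta> * W^2) / D^6"
      by (simp add: power_divide power_mult_distrib flip: power_mult) (simp add: power2_eq_square algebra_simps)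
    also have "\<dots> = q1 t * (9*(-4+3*r2)^2 * p t) / D^6" using H by simp
    also have "\<dots> = q1 t * ((6-4*r2)^3 * (q1 t)^2 + 5*r2*(6-4*r2)^2 * q1 t * D^2 - (6-4*r2)*D^4) / D^6"
      using key[of t] by (simp add: D_def)
    also have "\<dots> = ((6-4*r2) * q1 t / D^2)^3 + 5*r2*((6-4*r2) * q1 t / D^2)^2 - (6-4*r2) * q1 t / D^2"
      using D by (simp add: field_simps) (simp add: algebra_simps power2_eq_square power3_eq_cube power4_eq_xxxx)
    finally show "on_E \<delta> (phi_x t) (phi_y t W)" unfolding on_E_def x y .
  qed
next
  have r2ne1: "r2 \<noteq> 1" using r2sq by auto
  have c: "-4 + 3*r2 \<noteq> 0"
  proof
    assume "-4 + 3*r2 = 0" then have "r2 = 4/3" by (simp add: field_simps mult.commute)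
    moreover have "(4/3::complex)^2 \<noteq> 2" by (simp add: power2_eq_square)
    ultimately show False using r2sq by metis
  qed
  have q0: "q1 0 * p 0 \<noteq> 0"
  proof -
    have "Re (q1 0 * p 0) = -3 - 2*sqrt 2" by (simp add: q1_def p_def r2_def)
    moreover have "-3 - 2*sqrt 2 \<noteq> (0::real)" by (smt (verit) real_sqrt_ge_zero)
    ultimately show ?thesis by auto
  qed
  define W where "W = csqrt (q1 0 * p 0 / \<delta>)"
  have HW: "on_H \<delta> 0 W" using assms(2) by (simp add: on_H_def W_def)
  have HW': "on_H \<delta> 0 (-W)" using HW by (simp add: on_H_def)
  have W0: "W \<noteq> 0" using q0 assms(2) by (simp add: W_def)
  have ne: "phi_y 0 W \<noteq> phi_y 0 (-W)"
    using W0 c r2ne1 by (simp add: phi_y_def)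
  show "\<exists>t1 W1 t2 W2. on_H \<delta> t1 W1 \<and> on_H \<delta> t2 W2 \<and> t1 \<noteq> r2 - 1 \<and> t2 \<noteq> r2 - 1
            \<and> (phi_x t1, phi_y t1 W1) \<noteq> (phi_x t2, phi_y t2 W2)"
    using HW HW' ne r2ne1 by (intro exI[of _ 0] exI[of _ W] exI[of _ 0] exI[of _ "-W"]) auto
qed

end
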